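(* Let $f,g$ be slice monogenic functions on $\mathbb{R}^{n+1}$ that commute with respect to the $*$-product, i.e. $f*g=g*f$. Then $$\exp_*(f+g)=\exp_*(f)*\exp_*(g).$$
   Context: $\mathbb{R}_n$ is the real Clifford algebra generated by $e_1,\dots,e_n$ with $e_ie_j+e_je_i=-2\delta_{ij}$; paravectors $x=x_0+\sum x_ie_i$ are identified with $\mathbb{R}^{n+1}$. $\mathbb{S}^{n-1}$ is the set of unit vectors $\omega=\sum a_ie_i$ ($\omega^2=-1$). A function $f$ on an axially symmetric open set is slice monogenic if $f(u+\omega v)=\alpha(u,v)+\omega\beta(u,v)$ for all $\omega\in\mathbb{S}^{n-1}$ with $\mathbb{R}_n$-valued differentiable $\alpha,\beta$, $\alpha$ even and $\beta$ odd in $v$, satisfying $\partial_u\alpha=\partial_v\beta$, $\partial_u\beta=-\partial_v\alpha$. For $f=\alpha+\omega\beta$, $g=\gamma+\omega\delta$, the $*$-product is $(f*g)(u+\omega v)=(\alpha\gamma-\beta\delta)+\omega(\beta\gamma+\alpha\delta)$. The $*$-exponential of a slice monogenic $f$ is $\exp_*(f)=\sum_{k\ge0}\frac{1}{k!}f^{*k}$. *)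

theory Defs
  imports "HOL-Analysis.Analysis"
begin

text \<open>Elements of the real Clifford algebra R_n are represented as coefficient
functions on index sets: x = sum over A subset of {1..n} of x A e_A.
Only coefficients at subsets of {1..n} are meaningful for elements of R_n.\<close>

type_synonym cl = "nat set \<Rightarrow> real"

definition cl_add :: "cl \<Rightarrow> cl \<Rightarrow> cl" where
  "cl_add x y = (\<lambda>C. x C + y C)"

definition cl_scale :: "real \<Rightarrow> cl \<Rightarrow> cl" where
  "cl_scale r x = (\<lambda>C. r * x C)"

definition cl_real :: "real \<Rightarrow> cl" where
  "cl_real r = (\<lambda>C. if C = {} then r else 0)"

text \<open>Sign in e_A e_B = sign(A,B) e_(A symmetric-difference B), for the relations
e_i e_j + e_j e_i = -2 delta_ij.\<close>
definition cl_sign :: "nat set \<Rightarrow> nat set \<Rightarrow> real" where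
  "cl_sign A B = (-1) ^ (card {(a, b). a \<in> A \<and> b \<in> B \<and> b < a} + card (A \<inter> B))"

definition cl_mult :: "nat \<Rightarrow> cl \<Rightarrow> cl \<Rightarrow> cl" where
  "cl_mult n x y = (\<lambda>C. \<Sum>A\<in>Pow {1..n}. \<Sum>B\<in>Pow {1..n}.
      if (A - B) \<union> (B - A) = C then cl_sign A B * x A * y B else 0)"

definition cl_sphere :: "nat \<Rightarrow> cl set" where
  "cl_sphere n = {w. (\<forall>C. w C \<noteq> 0 \<longrightarrow> (\<exists>i\<in>{1..n}. C = {i}))
                     \<and> (\<Sum>i=1..n. (w {i})^2) = 1}"

text \<open>Paravectors x_0 + sum x_i e_i, identified with R^(n+1).\<close>
definition paravectors :: "nat \<Rightarrow> cl set" where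
  "paravectors n = {x. \<forall>C. x C \<noteq> 0 \<longrightarrow> C = {} \<or> (\<exists>i\<in>{1..n}. C = {i})}"

definition slice_pt :: "real \<Rightarrow> cl \<Rightarrow> real \<Rightarrow> cl" where
  "slice_pt u w v = cl_add (cl_real u) (cl_scale v w)"

definition is_stem :: "nat \<Rightarrow> (real \<times> real \<Rightarrow> cl) \<Rightarrow> (real \<times> real \<Rightarrow> cl) \<Rightarrow> bool" where
  "is_stem n \<alpha> \<beta> \<longleftrightarrow>
     (\<forall>p C. \<not> C \<subseteq> {1..n} \<longrightarrow> \<alpha> p C = 0 \<and> \<beta> p C = 0) \<and>
     (\<forall>u v C. \<alpha> (u, -v) C = \<alpha> (u, v) C \<and> \<beta> (u, -v) C = - \<beta> (u, v) C) \<and>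
     (\<forall>p C. (\<lambda>q. \<alpha> q C) differentiable (at p) \<and> (\<lambda>q. \<beta> q C) differentiable (at p)) \<and>
     (\<forall>u v C. deriv (\<lambda>t. \<alpha> (t, v) C) u = deriv (\<lambda>s. \<beta> (u, s) C) v \<and>
              deriv (\<lambda>t. \<beta> (t, v) C) u = - deriv (\<lambda>s. \<alpha> (u, s) C) v)"

definition stems_of :: "nat \<Rightarrow> (cl \<Rightarrow> cl) \<Rightarrow> (real \<times> real \<Rightarrow> cl) \<Rightarrow> (real \<times> real \<Rightarrow> cl) \<Rightarrow> bool" where
  "stems_of n f \<alpha> \<beta> \<longleftrightarrow> is_stem n \<alpha> \<beta> \<and>
     (\<forall>w\<in>cl_sphere n. \<forall>u v. f (slice_pt u w v) = cl_add (\<alpha> (u, v)) (cl_mult n w (\<beta> (u, v))))"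

definition slice_monogenic :: "nat \<Rightarrow> (cl \<Rightarrow> cl) \<Rightarrow> bool" where
  "slice_monogenic n f \<longleftrightarrow> (\<exists>\<alpha> \<beta>. stems_of n f \<alpha> \<beta>)"

definition star :: "nat \<Rightarrow> (cl \<Rightarrow> cl) \<Rightarrow> (cl \<Rightarrow> cl) \<Rightarrow> cl \<Rightarrow> cl" where
  "star n f g = (\<lambda>x. SOME y. \<exists>u v w \<alpha> \<beta> \<gamma> \<delta>.
      w \<in> cl_sphere n \<and> x = slice_pt u w v \<and> stems_of n f \<alpha> \<beta> \<and> stems_of n g \<gamma> \<delta> \<and>
      y = cl_add (cl_add (cl_mult n (\<alpha> (u, v)) (\<gamma> (u, v)))
                          (cl_scale (-1) (cl_mult n (\<beta> (u, v)) (\<delta> (u, v)))))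
                 (cl_mult n w (cl_add (cl_mult n (\<beta> (u, v)) (\<gamma> (u, v)))
                                      (cl_mult n (\<alpha> (u, v)) (\<delta> (u, v))))))"

primrec star_pow :: "nat \<Rightarrow> (cl \<Rightarrow> cl) \<Rightarrow> nat \<Rightarrow> cl \<Rightarrow> cl" where
  "star_pow n f 0 = (\<lambda>x. cl_real 1)"
| "star_pow n f (Suc k) = star n (star_pow n f k) f"

text \<open>exp_*(f) = sum_k f^{*k} / k!, the series converging coefficientwise
(equivalently in norm, R_n being finite dimensional).\<close>
definition star_exp :: "nat \<Rightarrow> (cl \<Rightarrow> cl) \<Rightarrow> cl \<Rightarrow> cl" where
  "star_exp n f = (\<lambda>x C. \<Sum>k. star_pow n f k x C / fact k)"

end

theory Submission
  imports Defs "HOL-Complex_Analysis.Complex_Analysis"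
begin


definition sd :: "'a set \<Rightarrow> 'a set \<Rightarrow> 'a set" where
  "sd A B = (A - B) \<union> (B - A)"

definition invs :: "nat set \<Rightarrow> nat set \<Rightarrow> (nat \<times> nat) set" where
  "invs A B = {(a, b). a \<in> A \<and> b \<in> B \<and> b < a}"

lemma card_sd_parity:
  assumes "finite P" "finite Q"
  shows "(-1::real) ^ card (sd P Q) = (-1) ^ card P * (-1) ^ card Q"
proof -
  have d: "(P - Q) \<inter> (Q - P) = {}" by auto
  have "card (sd P Q) = card (P - Q) + card (Q - P)"
    unfolding sd_def using assms d by (simp add: card_Un_disjoint)
  moreover have "card P = card (P - Q) + card (P \<inter> Q)"
    using assms card_Un_disjoint[of "P - Q" "P \<inter> Q"] by (simp add: Un_Diff_Int Int_Diff_disjoint Diff_Int_distrib2 inf_commute)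
  moreover have "card Q = card (Q - P) + card (P \<inter> Q)"
    using assms card_Un_disjoint[of "Q - P" "P \<inter> Q"] by (metis Int_commute Un_Diff_Int Int_Diff_disjoint finite_Diff finite_Int)
  ultimately show ?thesis by (simp add: power_add flip: power_mult_distrib) 
qed

lemma cl_sign_split: "cl_sign A B = (-1) ^ card (invs A B) * (-1) ^ card (A \<inter> B)"
  unfolding cl_sign_def invs_def by (simp add: power_add)

lemma finite_invs: "finite A \<Longrightarrow> finite B \<Longrightarrow> finite (invs A B)"
  unfolding invs_def by (rule finite_subset[of _ "A \<times> B"]) auto

lemma invs_sd1: "invs (sd A B) E = sd (invs A E) (invs B E)"
  unfolding invs_def sd_def by auto
lemma invs_sd2: "invs A (sd B E) = sd (invs A B) (invs A E)"
  unfolding invs_def sd_def by auto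
lemma int_sd1: "(sd A B) \<inter> E = sd (A \<inter> E) (B \<inter> E)"
  unfolding sd_def by auto
lemma int_sd2: "A \<inter> (sd B E) = sd (A \<inter> B) (A \<inter> E)"
  unfolding sd_def by auto

lemma sign_cocycle:
  assumes "finite A" "finite B" "finite E"
  shows "cl_sign A B * cl_sign (sd A B) E = cl_sign A (sd B E) * cl_sign B E"
  unfolding cl_sign_split invs_sd1 invs_sd2 int_sd1 int_sd2
  using assms by (simp add: card_sd_parity finite_invs)

lemma sd_assoc: "sd (sd A B) E = sd A (sd B E)"
  unfolding sd_def by auto

lemma sd_Pow: "A \<subseteq> S \<Longrightarrow> B \<subseteq> S \<Longrightarrow> sd A B \<subseteq> S"
  unfolding sd_def by auto

lemma sign_abs: "\<bar>cl_sign A B\<bar> = 1"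
  unfolding cl_sign_def by (simp add: power_abs)

lemma sign_sq: "cl_sign A B * cl_sign A B = 1"
  unfolding cl_sign_def by (simp flip: power_add)

lemma sum_delta_cond:
  assumes "finite S" "a \<in> S"
  shows "(\<Sum>D\<in>S. if P D \<and> a = D then g D else 0) = (if P a then g a else 0)"
proof -
  have "(\<Sum>D\<in>S. if P D \<and> a = D then g D else 0) = (\<Sum>D\<in>S. if a = D then (if P D then g D else 0) else 0)"
    by (rule sum.cong) auto
  then show ?thesis using assms by (simp add: sum.delta)
qed

lemma sum_swap4:
  "(\<Sum>D\<in>P. \<Sum>E\<in>P. \<Sum>A\<in>P. \<Sum>B\<in>P. f D E A B) = (\<Sum>A\<in>P. \<Sum>B\<in>P. \<Sum>E\<in>P. \<Sum>D\<in>P. f D E A B)"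
proof -
  have "(\<Sum>D\<in>P. \<Sum>E\<in>P. \<Sum>A\<in>P. \<Sum>B\<in>P. f D E A B) = (\<Sum>D\<in>P. \<Sum>A\<in>P. \<Sum>E\<in>P. \<Sum>B\<in>P. f D E A B)"
    by (rule sum.cong[OF refl], rule sum.swap)
  also have "\<dots> = (\<Sum>D\<in>P. \<Sum>A\<in>P. \<Sum>B\<in>P. \<Sum>E\<in>P. f D E A B)"
    by (rule sum.cong[OF refl], rule sum.cong[OF refl], rule sum.swap)
  also have "\<dots> = (\<Sum>A\<in>P. \<Sum>D\<in>P. \<Sum>B\<in>P. \<Sum>E\<in>P. f D E A B)"
    by (rule sum.swap)
  also have "\<dots> = (\<Sum>A\<in>P. \<Sum>B\<in>P. \<Sum>D\<in>P. \<Sum>E\<in>P. f D E A B)"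
    by (rule sum.cong[OF refl], rule sum.swap)
  also have "\<dots> = (\<Sum>A\<in>P. \<Sum>B\<in>P. \<Sum>E\<in>P. \<Sum>D\<in>P. f D E A B)"
    by (rule sum.cong[OF refl], rule sum.cong[OF refl], rule sum.swap)
  finally show ?thesis .
qed

type_synonym cx = "nat set \<Rightarrow> complex"

definition cm :: "nat \<Rightarrow> cx \<Rightarrow> cx \<Rightarrow> cx" where
  "cm n x y = (\<lambda>C. \<Sum>A\<in>Pow {1..n}. \<Sum>B\<in>Pow {1..n}.
      if sd A B = C then complex_of_real (cl_sign A B) * x A * y B else 0)"

lemma cm_assoc: "cm n (cm n x y) z = cm n x (cm n y z)"
proof
  fix C
  let ?P = "Pow {1..n}"
  let ?s = "\<lambda>A B. complex_of_real (cl_sign A B)"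
  have fin: "finite ?P" by simp
  have "cm n (cm n x y) z C = (\<Sum>D\<in>?P. \<Sum>E\<in>?P. \<Sum>A\<in>?P. \<Sum>B\<in>?P.
      if sd D E = C \<and> sd A B = D then ?s D E * ?s A B * x A * y B * z E else 0)"
    unfolding cm_def
    apply (rule sum.cong, rule refl)+
    subgoal for D E by (cases "sd D E = C") (auto simp: sum_distrib_left sum_distrib_right mult_ac intro!: sum.cong)
    done
  also have "\<dots> = (\<Sum>A\<in>?P. \<Sum>B\<in>?P. \<Sum>E\<in>?P. \<Sum>D\<in>?P.
      if sd D E = C \<and> sd A B = D then ?s D E * ?s A B * x A * y B * z E else 0)"
    by (rule sum_swap4)
  also have "\<dots> = (\<Sum>A\<in>?P. \<Sum>B\<in>?P. \<Sum>E\<in>?P.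
      if sd (sd A B) E = C then ?s (sd A B) E * ?s A B * x A * y B * z E else 0)"
    apply (rule sum.cong, rule refl)+
    subgoal for A B E
      using sd_Pow[of A "{1..n}" B] by (subst sum_delta_cond) auto
    done
  also have "\<dots> = (\<Sum>A\<in>?P. \<Sum>B\<in>?P. \<Sum>E\<in>?P.
      if sd A (sd B E) = C then ?s A (sd B E) * ?s B E * x A * y B * z E else 0)"
    apply (rule sum.cong, rule refl)+
    subgoal for A B E
      using sign_cocycle[of A B E] finite_subset[of A "{1..n}"] finite_subset[of B "{1..n}"]
        finite_subset[of E "{1..n}"]
      by (simp add: sd_assoc mult_ac flip: of_real_mult)
    done
  also have "\<dots> = cm n x (cm n y z) C"
    unfolding cm_def
  proof (rule sum.cong[OF refl])
    fix A assume A: "A \<in> ?P"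
    have "(\<Sum>D\<in>?P. if sd A D = C then ?s A D * x A * (\<Sum>B\<in>?P. \<Sum>E\<in>?P.
             if sd B E = D then ?s B E * y B * z E else 0) else 0)
       = (\<Sum>D\<in>?P. \<Sum>B\<in>?P. \<Sum>E\<in>?P. if sd A D = C \<and> sd B E = D then ?s A D * ?s B E * x A * y B * z E else 0)"
      apply (rule sum.cong[OF refl])
      subgoal for D by (cases "sd A D = C") (auto simp: sum_distrib_left mult_ac intro!: sum.cong)
      done
    also have "\<dots> = (\<Sum>B\<in>?P. \<Sum>E\<in>?P. \<Sum>D\<in>?P. if sd A D = C \<and> sd B E = D then ?s A D * ?s B E * x A * y B * z E else 0)"
      by (subst sum.swap, rule sum.cong[OF refl], rule sum.swap)
    also have "\<dots> = (\<Sum>B\<in>?P. \<Sum>E\<in>?P. if sd A (sd B E) = C then ?s A (sd B E) * ?s B E * x A * y B * z E else 0)"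
      apply (rule sum.cong[OF refl])+
      subgoal for B E using sd_Pow[of B "{1..n}" E] by (subst sum_delta_cond) auto
      done
    finally show "(\<Sum>B\<in>?P. \<Sum>E\<in>?P. if sd A (sd B E) = C then ?s A (sd B E) * ?s B E * x A * y B * z E else 0)
      = (\<Sum>D\<in>?P. if sd A D = C then ?s A D * x A * (\<Sum>B\<in>?P. \<Sum>E\<in>?P.
             if sd B E = D then ?s B E * y B * z E else 0) else 0)" by simp
  qed
  finally show "cm n (cm n x y) z C = cm n x (cm n y z) C" .
qed

definition supp :: "nat \<Rightarrow> cx \<Rightarrow> bool" where
  "supp n x \<longleftrightarrow> (\<forall>C. \<not> C \<subseteq> {1..n} \<longrightarrow> x C = 0)"

definition clone :: cx where "clone = (\<lambda>C. if C = {} then 1 else 0)"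

lemma supp_clone: "supp n clone" unfolding supp_def clone_def by auto

lemma cm_supp: "supp n (cm n x y)"
  unfolding supp_def cm_def
proof (intro allI impI sum.neutral ballI)
  fix C A B assume "\<not> C \<subseteq> {1..n}" "A \<in> Pow {1..n}" "B \<in> Pow {1..n}"
  then have "sd A B \<noteq> C" using sd_Pow[of A "{1..n}" B] by auto
  then show "(if sd A B = C then complex_of_real (cl_sign A B) * x A * y B else 0) = 0" by simp
qed

lemma if_sum: "(if P then sum g I else 0) = sum (\<lambda>i. if P then g i else 0) I" by simp

lemma sum_swap3: "(\<Sum>A\<in>P. \<Sum>B\<in>Q. \<Sum>i\<in>I. f A B i) = (\<Sum>i\<in>I. \<Sum>A\<in>P. \<Sum>B\<in>Q. f A B i)"
  by (subst sum.swap, rule sum.cong[OF refl], rule sum.swap)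

lemma sign_empty1[simp]: "cl_sign {} B = 1" unfolding cl_sign_def by simp
lemma sign_empty2[simp]: "cl_sign A {} = 1" unfolding cl_sign_def by simp
lemma sd_empty1[simp]: "sd {} B = B" unfolding sd_def by auto
lemma sd_empty2[simp]: "sd A {} = A" unfolding sd_def by auto

lemma clone_ne: "A \<noteq> {} \<Longrightarrow> clone A = 0" unfolding clone_def by simp
lemma clone_e: "clone {} = 1" unfolding clone_def by simp

lemma cm_one_left: assumes "supp n x" shows "cm n clone x = x"
proof
  fix C
  have "cm n clone x C = (\<Sum>A\<in>Pow {1..n}. if A = {} then (\<Sum>B\<in>Pow {1..n}. if sd A B = C then x B else 0) else 0)"
    unfolding cm_def
  proof (rule sum.cong[OF refl])
    fix A assume "A \<in> Pow {1..n}"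
    show "(\<Sum>B\<in>Pow {1..n}. if sd A B = C then complex_of_real (cl_sign A B) * clone A * x B else 0) =
      (if A = {} then \<Sum>B\<in>Pow {1..n}. if sd A B = C then x B else 0 else 0)"
      by (cases "A = {}") (simp_all add: clone_ne clone_e cong: if_cong)
  qed
  also have "\<dots> = (\<Sum>B\<in>Pow {1..n}. if B = C then x B else 0)" by (simp add: sum.delta)
  also have "\<dots> = x C" using assms unfolding supp_def by (auto simp: sum.delta')
  finally show "cm n clone x C = x C" .
qed

lemma cm_one_right: assumes "supp n x" shows "cm n x clone = x"
proof
  fix C
  have "cm n x clone C = (\<Sum>A\<in>Pow {1..n}. (\<Sum>B\<in>Pow {1..n}. if B = {} then (if sd A B = C then x A else 0) else 0))"
    unfolding cm_def
  proof (rule sum.cong[OF refl], rule sum.cong[OF refl])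
    fix A B
    show "(if sd A B = C then complex_of_real (cl_sign A B) * x A * clone B else 0) =
       (if B = {} then (if sd A B = C then x A else 0) else 0)"
      by (cases "B = {}") (simp_all add: clone_ne clone_e cong: if_cong)
  qed
  also have "\<dots> = (\<Sum>A\<in>Pow {1..n}. if A = C then x A else 0)" by (simp add: sum.delta)
  also have "\<dots> = x C" using assms unfolding supp_def by (auto simp: sum.delta')
  finally show "cm n x clone C = x C" .
qed

lemma cm_sum_left: "cm n (\<lambda>C. \<Sum>i\<in>I. f i C) z D = (\<Sum>i\<in>I. cm n (f i) z D)"
  unfolding cm_def
  apply (simp only: sum_distrib_left sum_distrib_right if_sum)
  by (rule sum_swap3)

lemma cm_sum_right: "cm n z (\<lambda>C. \<Sum>i\<in>I. f i C) D = (\<Sum>i\<in>I. cm n z (f i) D)"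
  unfolding cm_def
  apply (simp only: sum_distrib_left sum_distrib_right if_sum)
  by (rule sum_swap3)

lemma cm_scale_left: "cm n (\<lambda>C. c * x C) z D = c * cm n x z D"
  unfolding cm_def
  by (simp add: sum_distrib_left if_distrib if_distribR mult_ac cong: if_cong)

lemma cm_scale_right: "cm n z (\<lambda>C. c * x C) D = c * cm n z x D"
  unfolding cm_def
  by (simp add: sum_distrib_left if_distrib if_distribR mult_ac cong: if_cong)

lemma cm_add_left: "cm n (\<lambda>C. x C + y C) z D = cm n x z D + cm n y z D"
  using cm_sum_left[of n "\<lambda>i. if i = (0::nat) then x else y" "{0,1}" z D] by simp

lemma cm_add_right: "cm n z (\<lambda>C. x C + y C) D = cm n z x D + cm n z y D"
  using cm_sum_right[of n z "\<lambda>i. if i = (0::nat) then x else y" "{0,1}" D] by simp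

primrec cpow :: "nat \<Rightarrow> cx \<Rightarrow> nat \<Rightarrow> cx" where
  "cpow n x 0 = clone"
| "cpow n x (Suc k) = cm n (cpow n x k) x"

lemma cpow_supp: "supp n (cpow n x k)"
  by (cases k) (auto simp: supp_clone cm_supp)

lemma cpow_left: assumes "supp n x" shows "cm n x (cpow n x k) = cpow n x (Suc k)"
proof (induction k)
  case 0 then show ?case using assms by (simp add: cm_one_left cm_one_right)
next
  case (Suc k)
  have "cm n x (cpow n x (Suc k)) = cm n (cm n x (cpow n x k)) x" by (simp add: cm_assoc)
  then show ?case using Suc by simp
qed

lemma cpow_commute: assumes "supp n y" "cm n x y = cm n y x"
  shows "cm n (cpow n x k) y = cm n y (cpow n x k)"
proof (induction k)
  case 0 then show ?case using assms by (simp add: cm_one_left cm_one_right)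
next
  case (Suc k)
  have "cm n (cpow n x (Suc k)) y = cm n (cpow n x k) (cm n x y)" by (simp add: cm_assoc)
  also have "\<dots> = cm n (cm n (cpow n x k) y) x" by (simp add: cm_assoc assms)
  also have "\<dots> = cm n y (cpow n x (Suc k))" by (simp add: cm_assoc Suc)
  finally show ?case .
qed

definition csc :: "nat \<Rightarrow> cx \<Rightarrow> nat \<Rightarrow> cx" where
  "csc n x k = (\<lambda>C. cpow n x k C / fact k)"

lemma csc_alt: "csc n x k = (\<lambda>C. (1 / fact k) * cpow n x k C)"
  unfolding csc_def by auto

lemma times_S: assumes "supp n x"
  shows "cm n x (csc n x k) = (\<lambda>D. of_nat (Suc k) * csc n x (Suc k) D)"
proof
  fix D
  have "cm n x (csc n x k) D = (1 / fact k) * cpow n x (Suc k) D"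
    unfolding csc_alt cm_scale_right cpow_left[OF assms] ..
  also have "\<dots> = of_nat (Suc k) * csc n x (Suc k) D"
    unfolding csc_def by (simp add: field_simps del: of_nat_Suc)
  finally show "cm n x (csc n x k) D = of_nat (Suc k) * csc n x (Suc k) D" .
qed

lemma csc_commute: assumes "supp n y" "cm n x y = cm n y x"
  shows "cm n (csc n x k) y = cm n y (csc n x k)"
proof
  fix D show "cm n (csc n x k) y D = cm n y (csc n x k) D"
    unfolding csc_alt cm_scale_right cm_scale_left cpow_commute[OF assms] ..
qed

lemma supp_add: "supp n x \<Longrightarrow> supp n y \<Longrightarrow> supp n (\<lambda>C. x C + y C)"
  unfolding supp_def by auto

lemma exp_series_add:
  assumes sx: "supp n x" and sy: "supp n y" and comm: "cm n x y = cm n y x"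
  shows "csc n (\<lambda>C. x C + y C) m = (\<lambda>D. \<Sum>i\<le>m. cm n (csc n x i) (csc n y (m - i)) D)"
proof (induction m)
  case 0
  show ?case unfolding csc_def using supp_clone by (auto simp: cm_one_left)
next
  case (Suc m)
  let ?z = "\<lambda>C. x C + y C"
  let ?P = "\<lambda>i j D. cm n (csc n x i) (csc n y j) D"
  show ?case
  proof
    fix D
    have "of_nat (Suc m) * csc n ?z (Suc m) D = cm n ?z (csc n ?z m) D"
      using times_S[OF supp_add[OF sx sy], of m] by metis
    also have "\<dots> = cm n x (csc n ?z m) D + cm n y (csc n ?z m) D"
      by (rule cm_add_left)
    also have "\<dots> = (\<Sum>i\<le>m. cm n x (cm n (csc n x i) (csc n y (m - i))) D)
       + (\<Sum>i\<le>m. cm n y (cm n (csc n x i) (csc n y (m - i))) D)"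
      unfolding Suc cm_sum_right ..
    also have "\<dots> = (\<Sum>i\<le>m. cm n (cm n x (csc n x i)) (csc n y (m - i)) D)
       + (\<Sum>i\<le>m. cm n (csc n x i) (cm n y (csc n y (m - i))) D)"
    proof -
      have "cm n y (cm n (csc n x i) (csc n y (m - i))) = cm n (csc n x i) (cm n y (csc n y (m - i)))" for i
        by (metis cm_assoc csc_commute[OF sy comm])
      then show ?thesis by (simp add: cm_assoc)
    qed
    also have "\<dots> = (\<Sum>i\<le>m. of_nat (Suc i) * ?P (Suc i) (m - i) D)
       + (\<Sum>i\<le>m. of_nat (Suc m - i) * ?P i (Suc m - i) D)"
      unfolding times_S[OF sx] times_S[OF sy] cm_scale_left cm_scale_right
      by (simp add: Suc_diff_le del: of_nat_Suc)
    also have "(\<Sum>i\<le>m. of_nat (Suc i) * ?P (Suc i) (m - i) D)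
       = (\<Sum>i\<le>Suc m. of_nat i * ?P i (Suc m - i) D)"
      by (subst sum.atMost_Suc_shift) simp
    also have "(\<Sum>i\<le>m. of_nat (Suc m - i) * ?P i (Suc m - i) D)
       = (\<Sum>i\<le>Suc m. of_nat (Suc m - i) * ?P i (Suc m - i) D)"
      by simp
    also have "(\<Sum>i\<le>Suc m. of_nat i * ?P i (Suc m - i) D) + (\<Sum>i\<le>Suc m. of_nat (Suc m - i) * ?P i (Suc m - i) D)
       = (\<Sum>i\<le>Suc m. of_nat (Suc m) * ?P i (Suc m - i) D)"
      by (simp flip: sum.distrib distrib_right of_nat_add)
    also have "\<dots> = of_nat (Suc m) * (\<Sum>i\<le>Suc m. ?P i (Suc m - i) D)"
      by (simp only: sum_distrib_left)
    finally show "csc n ?z (Suc m) D = (\<Sum>i\<le>Suc m. ?P i (Suc m - i) D)"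
      by (simp del: sum.cl_ivl_Suc of_nat_Suc)
  qed
qed

definition nrm :: "nat \<Rightarrow> cx \<Rightarrow> real" where
  "nrm n x = (\<Sum>A\<in>Pow {1..n}. norm (x A))"

lemma nrm_nonneg: "0 \<le> nrm n x" unfolding nrm_def by (simp add: sum_nonneg)

lemma coef_le: assumes "supp n x" shows "norm (x C) \<le> nrm n x"
proof (cases "C \<subseteq> {1..n}")
  case True then show ?thesis unfolding nrm_def
    by (intro member_le_sum) auto
next
  case False then show ?thesis using assms nrm_nonneg[of n x] unfolding supp_def by auto
qed

lemma nrm_cm: "nrm n (cm n x y) \<le> nrm n x * nrm n y"
proof -
  let ?P = "Pow {1..n}"
  have "nrm n (cm n x y) \<le> (\<Sum>C\<in>?P. \<Sum>A\<in>?P. \<Sum>B\<in>?P. if sd A B = C then norm (x A) * norm (y B) else 0)"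
    unfolding nrm_def cm_def
  proof (rule sum_mono)
    fix C
    have "norm (\<Sum>A\<in>?P. \<Sum>B\<in>?P. if sd A B = C then complex_of_real (cl_sign A B) * x A * y B else 0)
      \<le> (\<Sum>A\<in>?P. norm (\<Sum>B\<in>?P. if sd A B = C then complex_of_real (cl_sign A B) * x A * y B else 0))"
      by (rule norm_sum)
    also have "\<dots> \<le> (\<Sum>A\<in>?P. \<Sum>B\<in>?P. norm (if sd A B = C then complex_of_real (cl_sign A B) * x A * y B else 0))"
      by (intro sum_mono norm_sum)
    also have "\<dots> = (\<Sum>A\<in>?P. \<Sum>B\<in>?P. if sd A B = C then norm (x A) * norm (y B) else 0)"
      by (intro sum.cong refl) (simp add: norm_mult sign_abs)
    finally show "norm (\<Sum>A\<in>?P. \<Sum>B\<in>?P. if sd A B = C then complex_of_real (cl_sign A B) * x A * y B else 0)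
      \<le> (\<Sum>A\<in>?P. \<Sum>B\<in>?P. if sd A B = C then norm (x A) * norm (y B) else 0)" .
  qed
  also have "\<dots> = (\<Sum>A\<in>?P. \<Sum>B\<in>?P. \<Sum>C\<in>?P. if sd A B = C then norm (x A) * norm (y B) else 0)"
    by (subst sum.swap, rule sum.cong[OF refl], rule sum.swap)
  also have "\<dots> = (\<Sum>A\<in>?P. \<Sum>B\<in>?P. norm (x A) * norm (y B))"
    by (intro sum.cong refl) (auto simp: sum.delta sd_Pow)
  also have "\<dots> = nrm n x * nrm n y"
    unfolding nrm_def by (simp add: sum_product)
  finally show ?thesis .
qed

lemma nrm_clone: "nrm n clone = 1"
  unfolding nrm_def clone_def by (simp add: sum.delta if_distrib cong: if_cong)

lemma nrm_cpow: "nrm n (cpow n x k) \<le> nrm n x ^ k"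
proof (induction k)
  case 0 then show ?case by (simp add: nrm_clone)
next
  case (Suc k)
  have "nrm n (cpow n x (Suc k)) \<le> nrm n (cpow n x k) * nrm n x" by (simp add: nrm_cm)
  also have "\<dots> \<le> nrm n x ^ k * nrm n x" by (rule mult_right_mono[OF Suc nrm_nonneg])
  finally show ?case by (simp add: mult.commute)
qed

lemma csc_bound: "norm (csc n x k C) \<le> nrm n x ^ k / fact k"
proof -
  have "norm (cpow n x k C) \<le> nrm n x ^ k"
    using coef_le[OF cpow_supp, of n x k C] nrm_cpow[of n x k] by linarith
  then show ?thesis unfolding csc_def by (simp add: norm_divide divide_right_mono)
qed

lemma summable_expr: "summable (\<lambda>k. (r::real) ^ k / fact k)"
  using summable_exp[of r] by (simp add: field_simps)

lemma csc_summable_norm: "summable (\<lambda>k. norm (csc n x k C))"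
  by (rule summable_comparison_test[OF _ summable_expr]) (auto intro!: exI csc_bound)

lemma csc_summable: "summable (\<lambda>k. csc n x k C)"
  by (rule summable_norm_cancel[OF csc_summable_norm])

definition cexp :: "nat \<Rightarrow> cx \<Rightarrow> cx" where
  "cexp n x = (\<lambda>C. \<Sum>k. csc n x k C)"

lemma cexp_add:
  assumes sx: "supp n x" and sy: "supp n y" and comm: "cm n x y = cm n y x"
  shows "cexp n (\<lambda>C. x C + y C) = cm n (cexp n x) (cexp n y)"
proof
  fix D
  let ?P = "Pow {1..n}"
  have "(\<lambda>k. \<Sum>A\<in>?P. \<Sum>B\<in>?P. if sd A B = D then complex_of_real (cl_sign A B) *
           (\<Sum>i\<le>k. csc n x i A * csc n y (k - i) B) else 0)
       sums (\<Sum>A\<in>?P. \<Sum>B\<in>?P. if sd A B = D then complex_of_real (cl_sign A B) *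
           ((\<Sum>k. csc n x k A) * (\<Sum>k. csc n y k B)) else 0)"
    apply (intro sums_sum)
    subgoal for A B
      apply (cases "sd A B = D")
       apply (simp, intro sums_mult Cauchy_product_sums csc_summable_norm)
      by simp
    done
  moreover have "(\<lambda>k. \<Sum>A\<in>?P. \<Sum>B\<in>?P. if sd A B = D then complex_of_real (cl_sign A B) *
           (\<Sum>i\<le>k. csc n x i A * csc n y (k - i) B) else 0)
     = (\<lambda>k. csc n (\<lambda>C. x C + y C) k D)"
  proof
    fix k
    have "(\<Sum>A\<in>?P. \<Sum>B\<in>?P. if sd A B = D then complex_of_real (cl_sign A B) *
           (\<Sum>i\<le>k. csc n x i A * csc n y (k - i) B) else 0)
        = (\<Sum>A\<in>?P. \<Sum>B\<in>?P. \<Sum>i\<le>k. if sd A B = D then complex_of_real (cl_sign A B) *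
           csc n x i A * csc n y (k - i) B else 0)"
      by (intro sum.cong refl) (auto simp: sum_distrib_left mult_ac)
    also have "\<dots> = (\<Sum>i\<le>k. cm n (csc n x i) (csc n y (k - i)) D)"
      unfolding cm_def by (rule sum_swap3)
    also have "\<dots> = csc n (\<lambda>C. x C + y C) k D"
      using exp_series_add[OF sx sy comm, of k] by metis
    finally show "(\<Sum>A\<in>?P. \<Sum>B\<in>?P. if sd A B = D then complex_of_real (cl_sign A B) *
           (\<Sum>i\<le>k. csc n x i A * csc n y (k - i) B) else 0) = csc n (\<lambda>C. x C + y C) k D" .
  qed
  ultimately have "(\<lambda>k. csc n (\<lambda>C. x C + y C) k D) sums cm n (cexp n x) (cexp n y) D"
    unfolding cm_def cexp_def by (simp add: mult.assoc cong: if_cong)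
  then show "cexp n (\<lambda>C. x C + y C) D = cm n (cexp n x) (cexp n y) D"
    unfolding cexp_def by (simp add: sums_iff)
qed



definition hol :: "(complex \<Rightarrow> cx) \<Rightarrow> bool" where
  "hol F \<longleftrightarrow> (\<forall>C. (\<lambda>z. F z C) holomorphic_on UNIV)"

definition good :: "nat \<Rightarrow> (complex \<Rightarrow> cx) \<Rightarrow> bool" where
  "good n F \<longleftrightarrow> (\<forall>z. supp n (F z)) \<and> (\<forall>z C. F (cnj z) C = cnj (F z C)) \<and> hol F"

definition ccnj :: "cx \<Rightarrow> cx" where "ccnj x = (\<lambda>C. cnj (x C))"

lemma cm_cnj: "cm n (ccnj x) (ccnj y) = ccnj (cm n x y)"
  unfolding cm_def ccnj_def by (auto intro!: sum.cong)

lemma cpow_cnj: "cpow n (ccnj x) k = ccnj (cpow n x k)"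
proof (induction k)
  case 0 show ?case by (auto simp: clone_def ccnj_def)
next
  case (Suc k) then show ?case by (simp add: cm_cnj)
qed

lemma hol_cm: "hol F \<Longrightarrow> hol G \<Longrightarrow> hol (\<lambda>z. cm n (F z) (G z))"
  unfolding hol_def cm_def
proof (intro allI holomorphic_on_sum)
  fix C A B assume "\<forall>C. (\<lambda>z. F z C) holomorphic_on UNIV" "\<forall>C. (\<lambda>z. G z C) holomorphic_on UNIV"
  then show "(\<lambda>z. if sd A B = C then complex_of_real (cl_sign A B) * F z A * G z B else 0) holomorphic_on UNIV"
    by (cases "sd A B = C") (auto intro!: holomorphic_intros)
qed

lemma hol_const: "hol (\<lambda>z. c)"
  unfolding hol_def by (auto intro!: holomorphic_intros)

lemma hol_add: "hol F \<Longrightarrow> hol G \<Longrightarrow> hol (\<lambda>z C. F z C + G z C)"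
  unfolding hol_def by (auto intro!: holomorphic_intros)

lemma hol_cpow: "hol F \<Longrightarrow> hol (\<lambda>z. cpow n (F z) k)"
  by (induction k) (auto simp: hol_const hol_cm)

lemma good_cm: "good n F \<Longrightarrow> good n G \<Longrightarrow> good n (\<lambda>z. cm n (F z) (G z))"
  unfolding good_def
proof (intro conjI allI)
  fix z C assume a: "(\<forall>z. supp n (F z)) \<and> (\<forall>z C. F (cnj z) C = cnj (F z C)) \<and> hol F"
    "(\<forall>z. supp n (G z)) \<and> (\<forall>z C. G (cnj z) C = cnj (G z C)) \<and> hol G"
  have "F (cnj z) = ccnj (F z)" "G (cnj z) = ccnj (G z)" using a unfolding ccnj_def by auto
  then show "cm n (F (cnj z)) (G (cnj z)) C = cnj (cm n (F z) (G z) C)"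
    by (simp add: cm_cnj) (simp add: ccnj_def)
qed (auto simp: cm_supp hol_cm)

lemma good_add: "good n F \<Longrightarrow> good n G \<Longrightarrow> good n (\<lambda>z C. F z C + G z C)"
  unfolding good_def by (auto simp: supp_add hol_add)

lemma good_clone: "good n (\<lambda>z. clone)"
  unfolding good_def using supp_clone by (auto simp: hol_const clone_def)

lemma good_cpow: "good n F \<Longrightarrow> good n (\<lambda>z. cpow n (F z) k)"
  by (induction k) (auto simp: good_clone good_cm)

lemma csc_supp: "supp n (csc n x k)"
  using cpow_supp[of n x k] unfolding supp_def csc_def by auto

lemma cexp_supp: "supp n (cexp n x)"
  using csc_supp[of n x] unfolding supp_def cexp_def by auto

lemma cexp_cnj: "cexp n (ccnj x) = ccnj (cexp n x)"
proof
  fix C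
  have "(\<lambda>k. csc n (ccnj x) k C) = (\<lambda>k. cnj (csc n x k C))"
    unfolding csc_def cpow_cnj by (auto simp: ccnj_def)
  moreover have "(\<lambda>k. cnj (csc n x k C)) sums cnj (cexp n x C)"
    unfolding sums_cnj cexp_def using csc_summable by (simp add: summable_sums)
  ultimately show "cexp n (ccnj x) C = ccnj (cexp n x) C"
    unfolding cexp_def ccnj_def by (simp add: sums_iff)
qed

lemma nrm_cont: "hol F \<Longrightarrow> continuous_on UNIV (\<lambda>z. nrm n (F z))"
  unfolding nrm_def hol_def
  by (intro continuous_intros) (auto intro: holomorphic_on_imp_continuous_on)

lemma hol_cexp: assumes "hol F" "\<And>z. supp n (F z)" shows "hol (\<lambda>z. cexp n (F z))"
  unfolding hol_def
proof
  fix C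
  show "(\<lambda>z. cexp n (F z) C) holomorphic_on UNIV"
  proof (rule holomorphic_uniform_sequence[where f = "\<lambda>N z. \<Sum>k<N. csc n (F z) k C"])
    fix N
    show "(\<lambda>z. \<Sum>k<N. csc n (F z) k C) holomorphic_on UNIV"
      unfolding csc_def using hol_cpow[OF assms(1)] unfolding hol_def
      by (intro holomorphic_intros) auto
  next
    fix z0 :: complex
    have "compact ((\<lambda>z. nrm n (F z)) ` cball z0 1)"
      by (rule compact_continuous_image) (auto intro: continuous_on_subset[OF nrm_cont[OF assms(1)]])
    then obtain M where M: "\<And>z. z \<in> cball z0 1 \<Longrightarrow> norm (nrm n (F z)) \<le> M"
      using compact_imp_bounded bounded_iff by (metis imageI)
    have "uniform_limit (cball z0 1) (\<lambda>N z. \<Sum>k<N. csc n (F z) k C) (\<lambda>z. suminf (\<lambda>k. csc n (F z) k C)) sequentially"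
    proof (rule Weierstrass_m_test[OF _ summable_expr[of M]])
      fix k z assume z: "z \<in> cball z0 1"
      have "norm (csc n (F z) k C) \<le> nrm n (F z) ^ k / fact k" by (rule csc_bound)
      also have "\<dots> \<le> M ^ k / fact k"
        using M[OF z] nrm_nonneg[of n "F z"]
        by (intro divide_right_mono power_mono) auto
      finally show "norm (csc n (F z) k C) \<le> M ^ k / fact k" .
    qed
    then show "\<exists>d>0. cball z0 d \<subseteq> UNIV \<and> uniform_limit (cball z0 d) (\<lambda>N z. \<Sum>k<N. csc n (F z) k C) (\<lambda>z. cexp n (F z) C) sequentially"
      unfolding cexp_def by (intro exI[of _ 1]) auto
  qed auto
qed

lemma good_cexp: "good n F \<Longrightarrow> good n (\<lambda>z. cexp n (F z))"
  unfolding good_def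
proof (intro conjI allI)
  fix z C assume a: "(\<forall>z. supp n (F z)) \<and> (\<forall>z C. F (cnj z) C = cnj (F z C)) \<and> hol F"
  have "F (cnj z) = ccnj (F z)" using a unfolding ccnj_def by auto
  then show "cexp n (F (cnj z)) C = cnj (cexp n (F z) C)"
    by (simp add: cexp_cnj) (simp add: ccnj_def)
qed (auto simp: cexp_supp hol_cexp)



lemma Complex_lin: "Complex a b = of_real a + \<i> * of_real b"
  by (simp add: Complex_eq)

lemma hd_t: "((\<lambda>t. Complex t v) has_derivative (\<lambda>h. of_real h)) (at u)"
  unfolding Complex_lin by (auto intro!: derivative_eq_intros)

lemma hd_s: "((\<lambda>s. Complex u s) has_derivative (\<lambda>h. \<i> * of_real h)) (at v)"
  unfolding Complex_lin by (auto intro!: derivative_eq_intros)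

lemma hd_q: "((\<lambda>q. Complex (fst q) (snd q)) has_derivative (\<lambda>q. Complex (fst q) (snd q))) (at p)"
  unfolding Complex_lin by (auto intro!: derivative_eq_intros)

lemma hd_phi: assumes "\<phi> holomorphic_on UNIV"
  shows "(\<phi> has_derivative (\<lambda>h. deriv \<phi> z * h)) (at z)"
  using holomorphic_derivI[OF assms open_UNIV UNIV_I, of z UNIV]
  by (simp add: has_field_derivative_def mult_commute_abs)

lemma stem_diff:
  assumes "\<phi> holomorphic_on UNIV"
  shows "(\<lambda>q. Re (\<phi> (Complex (fst q) (snd q)))) differentiable (at p)"
    "(\<lambda>q. Im (\<phi> (Complex (fst q) (snd q)))) differentiable (at p)"
proof -
  obtain D where "((\<lambda>q. \<phi> (Complex (fst q) (snd q))) has_derivative D) (at p)"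
    using has_derivative_compose[OF hd_q hd_phi[OF assms]] by blast
  then show "(\<lambda>q. Re (\<phi> (Complex (fst q) (snd q)))) differentiable (at p)"
    "(\<lambda>q. Im (\<phi> (Complex (fst q) (snd q)))) differentiable (at p)"
    unfolding differentiable_def
    using bounded_linear.has_derivative[OF bounded_linear_Re] bounded_linear.has_derivative[OF bounded_linear_Im]
    by blast+
qed

lemma stem_derivs:
  assumes "\<phi> holomorphic_on UNIV"
  shows "deriv (\<lambda>t. Re (\<phi> (Complex t v))) u = Re (deriv \<phi> (Complex u v))"
    "deriv (\<lambda>s. Re (\<phi> (Complex u s))) v = - Im (deriv \<phi> (Complex u v))"
    "deriv (\<lambda>t. Im (\<phi> (Complex t v))) u = Im (deriv \<phi> (Complex u v))"
    "deriv (\<lambda>s. Im (\<phi> (Complex u s))) v = Re (deriv \<phi> (Complex u v))"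
proof -
  let ?D = "deriv \<phi> (Complex u v)"
  have t: "((\<lambda>t. \<phi> (Complex t v)) has_derivative (\<lambda>h. ?D * of_real h)) (at u)"
    using has_derivative_compose[OF hd_t hd_phi[OF assms]] by simp
  have s: "((\<lambda>s. \<phi> (Complex u s)) has_derivative (\<lambda>h. ?D * (\<i> * of_real h))) (at v)"
    using has_derivative_compose[OF hd_s hd_phi[OF assms]] by simp
  have "((\<lambda>t. Re (\<phi> (Complex t v))) has_derivative (\<lambda>h. Re (?D * of_real h))) (at u)"
    by (rule bounded_linear.has_derivative[OF bounded_linear_Re t])
  moreover have "(\<lambda>h. Re (?D * of_real h)) = (*) (Re ?D)" by (auto simp: fun_eq_iff)
  ultimately have "((\<lambda>t. Re (\<phi> (Complex t v))) has_real_derivative Re ?D) (at u)"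
    by (simp add: has_field_derivative_def)
  then show "deriv (\<lambda>t. Re (\<phi> (Complex t v))) u = Re ?D" by (rule DERIV_imp_deriv)
  have "((\<lambda>t. Im (\<phi> (Complex t v))) has_derivative (\<lambda>h. Im (?D * of_real h))) (at u)"
    by (rule bounded_linear.has_derivative[OF bounded_linear_Im t])
  moreover have "(\<lambda>h. Im (?D * of_real h)) = (*) (Im ?D)" by (auto simp: fun_eq_iff)
  ultimately have "((\<lambda>t. Im (\<phi> (Complex t v))) has_real_derivative Im ?D) (at u)"
    by (simp add: has_field_derivative_def)
  then show "deriv (\<lambda>t. Im (\<phi> (Complex t v))) u = Im ?D" by (rule DERIV_imp_deriv)
  have "((\<lambda>s. Re (\<phi> (Complex u s))) has_derivative (\<lambda>h. Re (?D * (\<i> * of_real h)))) (at v)"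
    by (rule bounded_linear.has_derivative[OF bounded_linear_Re s])
  moreover have "(\<lambda>h. Re (?D * (\<i> * of_real h))) = (*) (- Im ?D)" by (auto simp: fun_eq_iff)
  ultimately have "((\<lambda>s. Re (\<phi> (Complex u s))) has_real_derivative - Im ?D) (at v)"
    by (simp add: has_field_derivative_def)
  then show "deriv (\<lambda>s. Re (\<phi> (Complex u s))) v = - Im ?D" by (rule DERIV_imp_deriv)
  have "((\<lambda>s. Im (\<phi> (Complex u s))) has_derivative (\<lambda>h. Im (?D * (\<i> * of_real h)))) (at v)"
    by (rule bounded_linear.has_derivative[OF bounded_linear_Im s])
  moreover have "(\<lambda>h. Im (?D * (\<i> * of_real h))) = (*) (Re ?D)" by (auto simp: fun_eq_iff)
  ultimately have "((\<lambda>s. Im (\<phi> (Complex u s))) has_real_derivative Re ?D) (at v)"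
    by (simp add: has_field_derivative_def)
  then show "deriv (\<lambda>s. Im (\<phi> (Complex u s))) v = Re ?D" by (rule DERIV_imp_deriv)
qed

definition reP :: "(complex \<Rightarrow> cx) \<Rightarrow> real \<times> real \<Rightarrow> cl" where
  "reP F = (\<lambda>p C. Re (F (Complex (fst p) (snd p)) C))"
definition imP :: "(complex \<Rightarrow> cx) \<Rightarrow> real \<times> real \<Rightarrow> cl" where
  "imP F = (\<lambda>p C. Im (F (Complex (fst p) (snd p)) C))"

lemma good_is_stem: assumes "good n F" shows "is_stem n (reP F) (imP F)"
proof -
  have s: "supp n (F z)" and c: "F (cnj z) C = cnj (F z C)" and h: "(\<lambda>z. F z C) holomorphic_on UNIV"
    for z C using assms unfolding good_def hol_def by auto
  have cc: "Complex u (-v) = cnj (Complex u v)" for u v by (simp add: complex_eq_iff)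
  show ?thesis unfolding is_stem_def reP_def imP_def
  proof (intro conjI allI impI)
    fix p C assume "\<not> C \<subseteq> {1..n}"
    then show "Re (F (Complex (fst p) (snd p)) C) = 0" "Im (F (Complex (fst p) (snd p)) C) = 0"
      using s unfolding supp_def by auto
  next
    fix u v C
    show "Re (F (Complex (fst (u, - v)) (snd (u, - v))) C) = Re (F (Complex (fst (u, v)) (snd (u, v))) C)"
      "Im (F (Complex (fst (u, - v)) (snd (u, - v))) C) = - Im (F (Complex (fst (u, v)) (snd (u, v))) C)"
      by (simp_all add: cc c)
  next
    fix p C
    show "(\<lambda>q. Re (F (Complex (fst q) (snd q)) C)) differentiable at p"
      "(\<lambda>q. Im (F (Complex (fst q) (snd q)) C)) differentiable at p"
      using stem_diff[OF h[of C]] by auto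
  next
    fix u v C
    show "deriv (\<lambda>t. Re (F (Complex (fst (t, v)) (snd (t, v))) C)) u = deriv (\<lambda>s. Im (F (Complex (fst (u, s)) (snd (u, s))) C)) v"
      "deriv (\<lambda>t. Im (F (Complex (fst (t, v)) (snd (t, v))) C)) u = - deriv (\<lambda>s. Re (F (Complex (fst (u, s)) (snd (u, s))) C)) v"
      using stem_derivs[OF h[of C], where u=u and v=v] by simp_all
  qed
qed



lemma lin2: fixes D :: "real \<times> real \<Rightarrow> real" and x y :: real
  assumes "bounded_linear D" shows "D (x, y) = x * D (1, 0) + y * D (0, 1)"
proof -
  have "(x, y) = x *\<^sub>R (1::real, 0::real) + y *\<^sub>R (0, 1)" by simp
  then have "D (x, y) = D (x *\<^sub>R (1, 0) + y *\<^sub>R (0, 1))" by metis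
  also have "\<dots> = D (x *\<^sub>R (1, 0)) + D (y *\<^sub>R (0, 1))"
    by (rule linear_add[OF bounded_linear.linear[OF assms]])
  also have "\<dots> = x * D (1, 0) + y * D (0, 1)"
    by (simp only: linear_scale[OF bounded_linear.linear[OF assms]] real_scaleR_def)
  finally show ?thesis .
qed

lemma partial_t: fixes a :: "real \<times> real \<Rightarrow> real" assumes "(a has_derivative D) (at (u, v))"
  shows "deriv (\<lambda>t. a (t, v)) u = D (1, 0)"
proof -
  have "((\<lambda>t. (t, v)) has_derivative (\<lambda>h. (h, 0))) (at u)"
    by (auto intro!: derivative_eq_intros)
  from has_derivative_compose[OF this assms]
  have "((\<lambda>t. a (t, v)) has_derivative (\<lambda>h. D (h, 0))) (at u)" by simp
  moreover have "(\<lambda>h. D (h, 0)) = (*) (D (1, 0))"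
  proof
    fix h :: real
    have l: "D (h, 0) = h * D (1, 0) + 0 * D (0, 1)" by (rule lin2[OF has_derivative_bounded_linear[OF assms]])
    show "D (h, 0) = D (1, 0) * h" by (simp only: l) simp
  qed
  ultimately have "((\<lambda>t. a (t, v)) has_real_derivative D (1, 0)) (at u)"
    by (metis has_field_derivative_def)
  then show ?thesis by (rule DERIV_imp_deriv)
qed

lemma partial_s: fixes a :: "real \<times> real \<Rightarrow> real" assumes "(a has_derivative D) (at (u, v))"
  shows "deriv (\<lambda>s. a (u, s)) v = D (0, 1)"
proof -
  have "((\<lambda>s. (u, s)) has_derivative (\<lambda>h. (0, h))) (at v)"
    by (auto intro!: derivative_eq_intros)
  from has_derivative_compose[OF this assms]
  have "((\<lambda>s. a (u, s)) has_derivative (\<lambda>h. D (0, h))) (at v)" by simp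
  moreover have "(\<lambda>h. D (0, h)) = (*) (D (0, 1))"
  proof
    fix h :: real
    have l: "D (0, h) = 0 * D (1, 0) + h * D (0, 1)" by (rule lin2[OF has_derivative_bounded_linear[OF assms]])
    show "D (0, h) = D (0, 1) * h" by (simp only: l) simp
  qed
  ultimately have "((\<lambda>s. a (u, s)) has_real_derivative D (0, 1)) (at v)"
    by (metis has_field_derivative_def)
  then show ?thesis by (rule DERIV_imp_deriv)
qed

lemma CR_hol:
  fixes a b :: "real \<times> real \<Rightarrow> real"
  assumes da: "\<And>p. a differentiable (at p)" and db: "\<And>p. b differentiable (at p)"
    and cr1: "\<And>u v. deriv (\<lambda>t. a (t, v)) u = deriv (\<lambda>s. b (u, s)) v"
    and cr2: "\<And>u v. deriv (\<lambda>t. b (t, v)) u = - deriv (\<lambda>s. a (u, s)) v"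
  shows "(\<lambda>z. Complex (a (Re z, Im z)) (b (Re z, Im z))) holomorphic_on UNIV"
proof -
  have "(\<lambda>z. Complex (a (Re z, Im z)) (b (Re z, Im z))) field_differentiable (at z0)" for z0
  proof -
    let ?p = "(Re z0, Im z0)"
    obtain Da where Da: "(a has_derivative Da) (at ?p)" using da[of ?p] unfolding differentiable_def by blast
    obtain Db where Db: "(b has_derivative Db) (at ?p)" using db[of ?p] unfolding differentiable_def by blast
    have la: "bounded_linear Da" and lb: "bounded_linear Db"
      using Da Db by (auto intro: has_derivative_bounded_linear)
    have e1: "Da (1, 0) = Db (0, 1)" using cr1[where u="Re z0" and v="Im z0"] partial_t[OF Da] partial_s[OF Db] by simp
    have e2: "Db (1, 0) = - Da (0, 1)" using cr2[where u="Re z0" and v="Im z0"] partial_t[OF Db] partial_s[OF Da] by simp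
    have rz: "((\<lambda>z. (Re z, Im z)) has_derivative (\<lambda>h. (Re h, Im h))) (at z0)"
      by (auto intro!: derivative_eq_intros)
    have ha: "((\<lambda>z. a (Re z, Im z)) has_derivative (\<lambda>h. Da (Re h, Im h))) (at z0)"
      using has_derivative_compose[OF rz Da] by simp
    have hb: "((\<lambda>z. b (Re z, Im z)) has_derivative (\<lambda>h. Db (Re h, Im h))) (at z0)"
      using has_derivative_compose[OF rz Db] by simp
    have "((\<lambda>z. of_real (a (Re z, Im z)) + \<i> * of_real (b (Re z, Im z))) has_derivative
          (\<lambda>h. of_real (Da (Re h, Im h)) + \<i> * of_real (Db (Re h, Im h)))) (at z0)"
      by (auto intro!: derivative_eq_intros ha hb)
    moreover have "(\<lambda>h. of_real (Da (Re h, Im h)) + \<i> * of_real (Db (Re h, Im h))) = (*) (Complex (Da (1, 0)) (Db (1, 0)))"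
    proof
      fix h
      show "of_real (Da (Re h, Im h)) + \<i> * of_real (Db (Re h, Im h)) = Complex (Da (1, 0)) (Db (1, 0)) * h"
        using lin2[OF la, of "Re h" "Im h"] lin2[OF lb, of "Re h" "Im h"] e1 e2
        by (simp add: complex_eq_iff algebra_simps)
    qed
    ultimately have "((\<lambda>z. Complex (a (Re z, Im z)) (b (Re z, Im z))) has_field_derivative Complex (Da (1, 0)) (Db (1, 0))) (at z0)"
      unfolding has_field_derivative_def Complex_lin by simp
    then show ?thesis unfolding field_differentiable_def by blast
  qed
  then show ?thesis unfolding holomorphic_on_def by (auto intro: field_differentiable_at_within)
qed

definition stemF :: "(real \<times> real \<Rightarrow> cl) \<Rightarrow> (real \<times> real \<Rightarrow> cl) \<Rightarrow> complex \<Rightarrow> cx" where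
  "stemF \<alpha> \<beta> = (\<lambda>z C. Complex (\<alpha> (Re z, Im z) C) (\<beta> (Re z, Im z) C))"

lemma stemF_re: "reP (stemF \<alpha> \<beta>) = \<alpha>" unfolding reP_def stemF_def by auto
lemma stemF_im: "imP (stemF \<alpha> \<beta>) = \<beta>" unfolding imP_def stemF_def by auto

lemma stem_good: assumes "is_stem n \<alpha> \<beta>" shows "good n (stemF \<alpha> \<beta>)"
  unfolding good_def hol_def
proof (intro conjI allI)
  fix z
  show "supp n (stemF \<alpha> \<beta> z)" using assms unfolding is_stem_def supp_def stemF_def
    by (auto simp: complex_eq_iff)
next
  fix z C
  show "stemF \<alpha> \<beta> (cnj z) C = cnj (stemF \<alpha> \<beta> z C)"
    using assms unfolding is_stem_def stemF_def
    by (auto simp: complex_eq_iff)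
next
  fix C
  show "(\<lambda>z. stemF \<alpha> \<beta> z C) holomorphic_on UNIV"
    unfolding stemF_def
    using assms unfolding is_stem_def
    by (intro CR_hol[where a = "\<lambda>q. \<alpha> q C" and b = "\<lambda>q. \<beta> q C"]) auto
qed



lemma cl_mult_sd: "cl_mult n x y = (\<lambda>C. \<Sum>A\<in>Pow {1..n}. \<Sum>B\<in>Pow {1..n}.
      if sd A B = C then cl_sign A B * x A * y B else 0)"
  unfolding cl_mult_def sd_def ..

lemma re_cm: "cl_add (cl_mult n (\<lambda>C. Re (X C)) (\<lambda>C. Re (Y C)))
     (cl_scale (-1) (cl_mult n (\<lambda>C. Im (X C)) (\<lambda>C. Im (Y C)))) = (\<lambda>C. Re (cm n X Y C))"
proof
  fix D
  show "cl_add (cl_mult n (\<lambda>C. Re (X C)) (\<lambda>C. Re (Y C)))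
     (cl_scale (-1) (cl_mult n (\<lambda>C. Im (X C)) (\<lambda>C. Im (Y C)))) D = Re (cm n X Y D)"
    unfolding cl_add_def cl_scale_def cl_mult_sd cm_def
    by (simp add: sum_negf flip: sum.distrib sum_subtractf) (intro sum.cong refl, simp add: algebra_simps)
qed

lemma im_cm: "cl_add (cl_mult n (\<lambda>C. Im (X C)) (\<lambda>C. Re (Y C)))
     (cl_mult n (\<lambda>C. Re (X C)) (\<lambda>C. Im (Y C))) = (\<lambda>C. Im (cm n X Y C))"
proof
  fix D
  show "cl_add (cl_mult n (\<lambda>C. Im (X C)) (\<lambda>C. Re (Y C)))
     (cl_mult n (\<lambda>C. Re (X C)) (\<lambda>C. Im (Y C))) D = Im (cm n X Y D)"
    unfolding cl_add_def cl_mult_sd cm_def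
    by (simp flip: sum.distrib) (intro sum.cong refl, simp add: algebra_simps)
qed

definition val :: "nat \<Rightarrow> (complex \<Rightarrow> cx) \<Rightarrow> real \<Rightarrow> cl \<Rightarrow> real \<Rightarrow> cl" where
  "val n F u w v = cl_add (reP F (u, v)) (cl_mult n w (imP F (u, v)))"

lemma formula_eq:
  "cl_add (cl_add (cl_mult n (reP F (u, v)) (reP G (u, v))) (cl_scale (-1) (cl_mult n (imP F (u, v)) (imP G (u, v)))))
      (cl_mult n w (cl_add (cl_mult n (imP F (u, v)) (reP G (u, v))) (cl_mult n (reP F (u, v)) (imP G (u, v)))))
   = val n (\<lambda>z. cm n (F z) (G z)) u w v"
  unfolding val_def reP_def imP_def using re_cm im_cm by simp

lemma cl_mult_neg2: "cl_mult n w (\<lambda>C. - y C) = (\<lambda>C. - cl_mult n w y C)"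
  unfolding cl_mult_sd by (auto simp: sum_negf[symmetric] intro!: sum.cong)

lemma cl_mult_neg1: "cl_mult n (\<lambda>C. - w C) y = (\<lambda>C. - cl_mult n w y C)"
  unfolding cl_mult_sd by (auto simp: sum_negf[symmetric] intro!: sum.cong)

lemma cl_mult_zero2: "cl_mult n w (\<lambda>C. 0) = (\<lambda>C. 0)"
  unfolding cl_mult_sd by (auto intro!: sum.neutral)

lemma cl_mult_add2: "cl_mult n w (cl_add y y') = cl_add (cl_mult n w y) (cl_mult n w y')"
  unfolding cl_mult_sd cl_add_def by (auto simp: algebra_simps sum.distrib[symmetric] intro!: sum.cong)

definition e1 :: cl where "e1 = (\<lambda>C. if C = {1} then 1 else 0)"

lemma e1_sphere: assumes "1 \<le> n" shows "e1 \<in> cl_sphere n"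
proof -
  have "(\<Sum>i=1..n. (e1 {i})^2) = (\<Sum>i\<in>{1..n}. if i = 1 then 1 else 0)"
    unfolding e1_def by (intro sum.cong refl) auto
  also have "\<dots> = 1" using assms by (simp add: sum.delta')
  finally have "(\<Sum>i=1..n. (e1 {i})^2) = 1" .
  moreover have "\<forall>C. e1 C \<noteq> 0 \<longrightarrow> (\<exists>i\<in>{1..n}. C = {i})" unfolding e1_def using assms by auto
  ultimately show ?thesis unfolding cl_sphere_def by blast
qed

lemma sd_inj: "sd A B = sd A C \<Longrightarrow> B = C"
  unfolding sd_def by blast

lemma sd_invol: "sd A (sd A C) = C"
  unfolding sd_def by blast

lemma e1_mult: assumes "1 \<le> n" "C \<subseteq> {1..n}"
  shows "cl_mult n e1 y (sd {1} C) = cl_sign {1} C * y C"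
proof -
  have P1: "{1} \<in> Pow {1..n}" using assms by auto
  have "cl_mult n e1 y (sd {1} C) = (\<Sum>A\<in>Pow {1..n}. if A = {1} then
      (\<Sum>B\<in>Pow {1..n}. if sd {1} B = sd {1} C then cl_sign {1} B * y B else 0) else 0)"
    unfolding cl_mult_sd
  proof (rule sum.cong[OF refl])
    fix A
    show "(\<Sum>B\<in>Pow {1..n}. if sd A B = sd {1} C then cl_sign A B * e1 A * y B else 0) =
      (if A = {1} then \<Sum>B\<in>Pow {1..n}. if sd {1} B = sd {1} C then cl_sign {1} B * y B else 0 else 0)"
      by (cases "A = {1}") (simp_all add: e1_def cong: if_cong)
  qed
  also have "\<dots> = (\<Sum>B\<in>Pow {1..n}. if sd {1} B = sd {1} C then cl_sign {1} B * y B else 0)"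
    using P1 by (simp add: sum.delta')
  also have "\<dots> = (\<Sum>B\<in>Pow {1..n}. if B = C then cl_sign {1} B * y B else 0)"
    by (intro sum.cong refl) (auto dest: sd_inj)
  also have "\<dots> = cl_sign {1} C * y C" using assms by (simp add: sum.delta')
  finally show ?thesis .
qed

lemma e1_inj: assumes "1 \<le> n" "\<And>C. \<not> C \<subseteq> {1..n} \<Longrightarrow> y C = 0" "\<And>C. \<not> C \<subseteq> {1..n} \<Longrightarrow> y' C = 0"
  and "cl_mult n e1 y = cl_mult n e1 y'"
  shows "y = y'"
proof
  fix C
  show "y C = y' C"
  proof (cases "C \<subseteq> {1..n}")
    case True
    have "cl_sign {1} C * y C = cl_sign {1} C * y' C"
      using e1_mult[OF assms(1) True, of y] e1_mult[OF assms(1) True, of y'] assms(4) by simp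
    moreover have "cl_sign {1} C \<noteq> 0" using sign_abs[of "{1}" C] by auto
    ultimately show ?thesis by simp
  next
    case False then show ?thesis using assms by simp
  qed
qed



lemma stem_neg: assumes "is_stem n \<alpha> \<beta>"
  shows "\<alpha> (u, -v) = \<alpha> (u, v)" "\<beta> (u, -v) = (\<lambda>C. - \<beta> (u, v) C)"
  using assms unfolding is_stem_def by auto

lemma stems_unique:
  assumes n: "1 \<le> n" and s1: "stems_of n f \<alpha> \<beta>" and s2: "stems_of n f \<alpha>' \<beta>'"
  shows "\<alpha> = \<alpha>' \<and> \<beta> = \<beta>'"
proof -
  have st1: "is_stem n \<alpha> \<beta>" and st2: "is_stem n \<alpha>' \<beta>'" using s1 s2 unfolding stems_of_def by auto
  have e: "e1 \<in> cl_sphere n" by (rule e1_sphere[OF n])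
  have "\<alpha> (u, v) = \<alpha>' (u, v) \<and> \<beta> (u, v) = \<beta>' (u, v)" for u v
  proof -
    have h1: "cl_add (\<alpha> (u, v)) (cl_mult n e1 (\<beta> (u, v))) = cl_add (\<alpha>' (u, v)) (cl_mult n e1 (\<beta>' (u, v)))"
      using s1 s2 e unfolding stems_of_def by metis
    have "cl_add (\<alpha> (u, -v)) (cl_mult n e1 (\<beta> (u, -v))) = cl_add (\<alpha>' (u, -v)) (cl_mult n e1 (\<beta>' (u, -v)))"
      using s1 s2 e unfolding stems_of_def by metis
    then have h2: "cl_add (\<alpha> (u, v)) (\<lambda>C. - cl_mult n e1 (\<beta> (u, v)) C) = cl_add (\<alpha>' (u, v)) (\<lambda>C. - cl_mult n e1 (\<beta>' (u, v)) C)"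
      unfolding stem_neg[OF st1] stem_neg[OF st2] cl_mult_neg2 .
    have a: "\<alpha> (u, v) C = \<alpha>' (u, v) C" for C
      using fun_cong[OF h1, of C] fun_cong[OF h2, of C] unfolding cl_add_def by simp
    have b: "cl_mult n e1 (\<beta> (u, v)) C = cl_mult n e1 (\<beta>' (u, v)) C" for C
      using fun_cong[OF h1, of C] fun_cong[OF h2, of C] unfolding cl_add_def by simp
    have "\<beta> (u, v) = \<beta>' (u, v)"
      apply (rule e1_inj[OF n])
      using st1 st2 b unfolding is_stem_def by auto
    then show ?thesis using a by auto
  qed
  then show ?thesis by auto
qed

lemma sphere_empty: "w \<in> cl_sphere n \<Longrightarrow> w {} = 0"
  unfolding cl_sphere_def by force

lemma sphere_out: "w \<in> cl_sphere n \<Longrightarrow> \<not> (\<exists>i\<in>{1..n}. C = {i}) \<Longrightarrow> w C = 0"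
  unfolding cl_sphere_def by force

lemma sphere_sq: "w \<in> cl_sphere n \<Longrightarrow> (\<Sum>i=1..n. (w {i})^2) = 1"
  unfolding cl_sphere_def by auto

lemma repr:
  assumes w: "w \<in> cl_sphere n" and w': "w' \<in> cl_sphere n"
    and eq: "slice_pt u w v = slice_pt u' w' v'"
  shows "u' = u \<and> ((v' = v \<and> w' = w) \<or> (v' = -v \<and> w' = (\<lambda>C. - w C)) \<or> (v = 0 \<and> v' = 0))"
proof -
  have pt: "v * w C = v' * w' C" if "C \<noteq> {}" for C
    using fun_cong[OF eq, of C] that unfolding slice_pt_def cl_add_def cl_real_def cl_scale_def by simp
  have pt0: "v * w C = v' * w' C" for C
    using pt[of C] sphere_empty[OF w] sphere_empty[OF w'] by (cases "C = {}") auto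
  have u: "u' = u"
    using fun_cong[OF eq, of "{}"] sphere_empty[OF w] sphere_empty[OF w']
    unfolding slice_pt_def cl_add_def cl_real_def cl_scale_def by simp
  have "v^2 = (\<Sum>i=1..n. (v * w {i})^2)"
    using sphere_sq[OF w] by (simp add: power_mult_distrib flip: sum_distrib_left)
  also have "\<dots> = (\<Sum>i=1..n. (v' * w' {i})^2)" using pt0 by simp
  also have "\<dots> = v'^2"
    using sphere_sq[OF w'] by (simp add: power_mult_distrib flip: sum_distrib_left)
  finally have "v^2 = v'^2" .
  then have vv: "v' = v \<or> v' = -v" by (metis power2_eq_iff)
  show ?thesis
  proof (cases "v = 0")
    case True then show ?thesis using vv u by auto
  next
    case False
    from vv show ?thesis
    proof
      assume "v' = v"
      then have "w' = w" using pt0 False by (auto simp: fun_eq_iff)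
      then show ?thesis using u \<open>v' = v\<close> by auto
    next
      assume "v' = -v"
      have "w' C = - w C" for C
      proof -
        have "v * w C = v * (- w' C)" using pt0[of C] \<open>v' = -v\<close> by simp
        then have "w C = - w' C" using False by (metis mult_left_cancel)
        then show ?thesis by simp
      qed
      then have "w' = (\<lambda>C. - w C)" by auto
      then show ?thesis using u \<open>v' = -v\<close> by auto
    qed
  qed
qed

lemma good_parity:
  assumes "good n F"
  shows "reP F (u, -v) = reP F (u, v)" "imP F (u, -v) = (\<lambda>C. - imP F (u, v) C)"
proof -
  have cc: "Complex u (-v) = cnj (Complex u v)" by (simp add: complex_eq_iff)
  have c: "F (cnj z) C = cnj (F z C)" for z C using assms unfolding good_def by auto
  show "reP F (u, -v) = reP F (u, v)" "imP F (u, -v) = (\<lambda>C. - imP F (u, v) C)"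
    unfolding reP_def imP_def by (auto simp: cc c)
qed

lemma good_im0: assumes "good n F" shows "imP F (u, 0) = (\<lambda>C. 0)"
  using good_parity(2)[OF assms, of u 0] by (auto simp: fun_eq_iff)

lemma val_repr:
  assumes g: "good n F" and w: "w \<in> cl_sphere n" and w': "w' \<in> cl_sphere n"
    and eq: "slice_pt u w v = slice_pt u' w' v'"
  shows "val n F u' w' v' = val n F u w v"
  using repr[OF w w' eq]
proof (elim conjE disjE)
  assume "u' = u" "v' = v" "w' = w" then show ?thesis by simp
next
  assume "u' = u" "v' = -v" "w' = (\<lambda>C. - w C)"
  then show ?thesis unfolding val_def
    by (simp add: good_parity[OF g] cl_mult_neg1 cl_mult_neg2)
next
  assume "u' = u" "v = 0" "v' = 0"
  then show ?thesis unfolding val_def by (simp add: good_im0[OF g] cl_mult_zero2)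
qed

lemma star_val:
  assumes n: "1 \<le> n" and gF: "good n F" and gG: "good n G"
    and sf: "stems_of n f (reP F) (imP F)" and sg: "stems_of n g (reP G) (imP G)"
    and w: "w \<in> cl_sphere n"
  shows "star n f g (slice_pt u w v) = val n (\<lambda>z. cm n (F z) (G z)) u w v"
  unfolding star_def
proof (rule some_equality)
  show "\<exists>u' v' w' \<alpha> \<beta> \<gamma> \<delta>. w' \<in> cl_sphere n \<and> slice_pt u w v = slice_pt u' w' v' \<and>
       stems_of n f \<alpha> \<beta> \<and> stems_of n g \<gamma> \<delta> \<and>
       val n (\<lambda>z. cm n (F z) (G z)) u w v = cl_add (cl_add (cl_mult n (\<alpha> (u', v')) (\<gamma> (u', v')))
          (cl_scale (- 1) (cl_mult n (\<beta> (u', v')) (\<delta> (u', v')))))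
          (cl_mult n w' (cl_add (cl_mult n (\<beta> (u', v')) (\<gamma> (u', v'))) (cl_mult n (\<alpha> (u', v')) (\<delta> (u', v')))))"
    using w sf sg formula_eq[of n F u v G w, symmetric] by blast
next
  fix y
  assume "\<exists>u' v' w' \<alpha> \<beta> \<gamma> \<delta>. w' \<in> cl_sphere n \<and> slice_pt u w v = slice_pt u' w' v' \<and>
       stems_of n f \<alpha> \<beta> \<and> stems_of n g \<gamma> \<delta> \<and>
       y = cl_add (cl_add (cl_mult n (\<alpha> (u', v')) (\<gamma> (u', v')))
          (cl_scale (- 1) (cl_mult n (\<beta> (u', v')) (\<delta> (u', v')))))
          (cl_mult n w' (cl_add (cl_mult n (\<beta> (u', v')) (\<gamma> (u', v'))) (cl_mult n (\<alpha> (u', v')) (\<delta> (u', v')))))"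
  then obtain u' v' w' \<alpha> \<beta> \<gamma> \<delta> where w': "w' \<in> cl_sphere n" and eq: "slice_pt u w v = slice_pt u' w' v'"
    and s1: "stems_of n f \<alpha> \<beta>" and s2: "stems_of n g \<gamma> \<delta>"
    and y: "y = cl_add (cl_add (cl_mult n (\<alpha> (u', v')) (\<gamma> (u', v')))
          (cl_scale (- 1) (cl_mult n (\<beta> (u', v')) (\<delta> (u', v')))))
          (cl_mult n w' (cl_add (cl_mult n (\<beta> (u', v')) (\<gamma> (u', v'))) (cl_mult n (\<alpha> (u', v')) (\<delta> (u', v')))))"
    by blast
  have "\<alpha> = reP F \<and> \<beta> = imP F" using stems_unique[OF n s1 sf] .
  moreover have "\<gamma> = reP G \<and> \<delta> = imP G" using stems_unique[OF n s2 sg] .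
  ultimately have "y = val n (\<lambda>z. cm n (F z) (G z)) u' w' v'" using y formula_eq by simp
  also have "\<dots> = val n (\<lambda>z. cm n (F z) (G z)) u w v"
    by (rule val_repr[OF good_cm[OF gF gG] w w' eq])
  finally show "y = val n (\<lambda>z. cm n (F z) (G z)) u w v" .
qed



definition rep :: "nat \<Rightarrow> (cl \<Rightarrow> cl) \<Rightarrow> (complex \<Rightarrow> cx) \<Rightarrow> bool" where
  "rep n h F \<longleftrightarrow> good n F \<and> stems_of n h (reP F) (imP F)"

lemma rep_intro:
  assumes "good n F" "\<And>w u v. w \<in> cl_sphere n \<Longrightarrow> h (slice_pt u w v) = val n F u w v"
  shows "rep n h F"
  unfolding rep_def stems_of_def using assms good_is_stem[OF assms(1)] unfolding val_def by auto

lemma rep_val: "rep n h F \<Longrightarrow> w \<in> cl_sphere n \<Longrightarrow> h (slice_pt u w v) = val n F u w v"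
  unfolding rep_def stems_of_def val_def by auto

lemma sm_rep: assumes "slice_monogenic n f" shows "\<exists>F. rep n f F"
proof -
  obtain \<alpha> \<beta> where s: "stems_of n f \<alpha> \<beta>" using assms unfolding slice_monogenic_def by blast
  then have "is_stem n \<alpha> \<beta>" unfolding stems_of_def by auto
  then have "good n (stemF \<alpha> \<beta>)" by (rule stem_good)
  moreover have "stems_of n f (reP (stemF \<alpha> \<beta>)) (imP (stemF \<alpha> \<beta>))" using s by (simp add: stemF_re stemF_im)
  ultimately show ?thesis unfolding rep_def by blast
qed

lemma rep_star: assumes "1 \<le> n" "rep n f F" "rep n g G"
  shows "rep n (star n f g) (\<lambda>z. cm n (F z) (G z))"
proof -
  have gF: "good n F" and sf: "stems_of n f (reP F) (imP F)" using assms(2) unfolding rep_def by auto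
  have gG: "good n G" and sg: "stems_of n g (reP G) (imP G)" using assms(3) unfolding rep_def by auto
  show ?thesis by (rule rep_intro[OF good_cm[OF gF gG] star_val[OF assms(1) gF gG sf sg]])
qed

lemma rep_one: "rep n (\<lambda>x. cl_real 1) (\<lambda>z. clone)"
proof (rule rep_intro[OF good_clone])
  fix w u v
  have "reP (\<lambda>z. clone) (u, v) = cl_real 1" unfolding reP_def clone_def cl_real_def by auto
  moreover have "imP (\<lambda>z. clone) (u, v) = (\<lambda>C. 0)" unfolding imP_def clone_def by auto
  ultimately show "cl_real 1 = val n (\<lambda>z. clone) u w v"
    unfolding val_def by (simp add: cl_mult_zero2 cl_add_def)
qed

lemma rep_pow: assumes "1 \<le> n" "rep n h F"
  shows "rep n (star_pow n h k) (\<lambda>z. cpow n (F z) k)"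
proof (induction k)
  case 0 then show ?case using rep_one by simp
next
  case (Suc k) then show ?case using rep_star[OF assms(1) Suc assms(2)] by simp
qed

lemma Re_div_fact: "Re (c / fact k) = Re c / fact k"
  by (metis Re_divide_of_real of_real_fact)
lemma Im_div_fact: "Im (c / fact k) = Im c / fact k"
  by (metis Im_divide_of_real of_real_fact)

lemma val_unfold: "val n F u w v C = Re (F (Complex u v) C) +
   (\<Sum>A\<in>Pow {1..n}. \<Sum>B\<in>Pow {1..n}. if sd A B = C then cl_sign A B * w A * Im (F (Complex u v) B) else 0)"
  unfolding val_def cl_add_def cl_mult_sd reP_def imP_def by (simp cong: if_cong)

lemma rep_exp: assumes n: "1 \<le> n" and r: "rep n h F"
  shows "rep n (star_exp n h) (\<lambda>z. cexp n (F z))"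
proof (rule rep_intro)
  show "good n (\<lambda>z. cexp n (F z))" using r unfolding rep_def by (auto intro: good_cexp)
next
  fix w u v assume w: "w \<in> cl_sphere n"
  show "star_exp n h (slice_pt u w v) = val n (\<lambda>z. cexp n (F z)) u w v"
  proof
    fix C
    let ?X = "F (Complex u v)"
    have e: "star_pow n h k (slice_pt u w v) C / fact k = Re (csc n ?X k C) +
      (\<Sum>A\<in>Pow {1..n}. \<Sum>B\<in>Pow {1..n}. if sd A B = C then cl_sign A B * w A * Im (csc n ?X k B) else 0)" for k
    proof -
      have "star_pow n h k (slice_pt u w v) C = val n (\<lambda>z. cpow n (F z) k) u w v C"
        using rep_val[OF rep_pow[OF n r] w] by simp
      then have "star_pow n h k (slice_pt u w v) C / fact k = (Re (cpow n ?X k C) +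
          (\<Sum>A\<in>Pow {1..n}. \<Sum>B\<in>Pow {1..n}. if sd A B = C then cl_sign A B * w A * Im (cpow n ?X k B) else 0)) / fact k"
        unfolding val_unfold by simp
      also have "\<dots> = Re (csc n ?X k C) +
      (\<Sum>A\<in>Pow {1..n}. \<Sum>B\<in>Pow {1..n}. if sd A B = C then cl_sign A B * w A * Im (csc n ?X k B) else 0)"
        unfolding csc_def Re_div_fact Im_div_fact
        by (simp add: add_divide_distrib sum_divide_distrib) (intro sum.cong refl, simp)
      finally show ?thesis .
    qed
    have "(\<lambda>k. Re (csc n ?X k C) +
      (\<Sum>A\<in>Pow {1..n}. \<Sum>B\<in>Pow {1..n}. if sd A B = C then cl_sign A B * w A * Im (csc n ?X k B) else 0))
      sums (Re (cexp n ?X C) +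
      (\<Sum>A\<in>Pow {1..n}. \<Sum>B\<in>Pow {1..n}. if sd A B = C then cl_sign A B * w A * Im (cexp n ?X B) else 0))"
    proof (intro sums_add sums_sum)
      show "(\<lambda>k. Re (csc n ?X k C)) sums Re (cexp n ?X C)"
        unfolding cexp_def by (intro sums_Re summable_sums csc_summable)
    next
      fix A B
      show "(\<lambda>k. if sd A B = C then cl_sign A B * w A * Im (csc n ?X k B) else 0) sums
        (if sd A B = C then cl_sign A B * w A * Im (cexp n ?X B) else 0)"
        unfolding cexp_def by (cases "sd A B = C") (auto intro!: sums_mult sums_Im summable_sums csc_summable)
    qed
    then have "(\<lambda>k. star_pow n h k (slice_pt u w v) C / fact k) sums val n (\<lambda>z. cexp n (F z)) u w v C"
      unfolding e val_unfold by simp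
    then show "star_exp n h (slice_pt u w v) C = val n (\<lambda>z. cexp n (F z)) u w v C"
      unfolding star_exp_def by (simp add: sums_iff)
  qed
qed

lemma rep_add: assumes "rep n f F" "rep n g G"
  shows "rep n (\<lambda>y. cl_add (f y) (g y)) (\<lambda>z C. F z C + G z C)"
proof (rule rep_intro)
  show "good n (\<lambda>z C. F z C + G z C)" using assms unfolding rep_def by (auto intro: good_add)
next
  fix w u v assume w: "w \<in> cl_sphere n"
  have e1: "reP (\<lambda>z C. F z C + G z C) (u, v) = cl_add (reP F (u, v)) (reP G (u, v))"
    and e2: "imP (\<lambda>z C. F z C + G z C) (u, v) = cl_add (imP F (u, v)) (imP G (u, v))"
    unfolding reP_def imP_def cl_add_def by auto
  show "cl_add (f (slice_pt u w v)) (g (slice_pt u w v)) = val n (\<lambda>z C. F z C + G z C) u w v"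
    unfolding rep_val[OF assms(1) w] rep_val[OF assms(2) w] val_def e1 e2 cl_mult_add2
    by (auto simp: cl_add_def)
qed



lemma slice_para: "w \<in> cl_sphere n \<Longrightarrow> slice_pt u w v \<in> paravectors n"
  unfolding paravectors_def slice_pt_def cl_add_def cl_real_def cl_scale_def cl_sphere_def
  by auto

lemma para_repr: assumes n: "1 \<le> n" and x: "x \<in> paravectors n"
  shows "\<exists>u w v. w \<in> cl_sphere n \<and> x = slice_pt u w v"
proof -
  have xs: "x C = 0" if "C \<noteq> {}" "\<not> (\<exists>i\<in>{1..n}. C = {i})" for C
    using x that unfolding paravectors_def by auto
  define r where "r = sqrt (\<Sum>i=1..n. (x {i})^2)"
  have S0: "0 \<le> (\<Sum>i=1..n. (x {i})^2)" by (simp add: sum_nonneg)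
  show ?thesis
  proof (cases "r = 0")
    case True
    then have "(\<Sum>i=1..n. (x {i})^2) = 0" unfolding r_def using S0 by simp
    then have z: "x {i} = 0" if "i \<in> {1..n}" for i
      using sum_nonneg_eq_0_iff[of "{1..n}" "\<lambda>i. (x {i})^2"] that by auto
    have "x = slice_pt (x {}) e1 0"
    proof
      fix C
      show "x C = slice_pt (x {}) e1 0 C"
        unfolding slice_pt_def cl_add_def cl_real_def cl_scale_def
      proof (cases "C = {}")
        case False
        have "x C = 0"
        proof (cases "\<exists>i\<in>{1..n}. C = {i}")
          case True then show ?thesis using z by auto
        next
          case F2: False then show ?thesis using xs[OF False F2] by simp
        qed
        then show "x C = (\<lambda>C. (if C = {} then x {} else 0) + 0 * e1 C) C" using False by simp
      qed simp
    qed
    then show ?thesis using e1_sphere[OF n] by blast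
  next
    case False
    then have rpos: "r > 0" unfolding r_def using S0 by simp
    define w where "w = (\<lambda>C. if (\<exists>i\<in>{1..n}. C = {i}) then x C / r else 0)"
    have wi: "w {i} = x {i} / r" if "i \<in> {1..n}" for i using that unfolding w_def by auto
    have "(\<Sum>i=1..n. (w {i})^2) = (\<Sum>i=1..n. (x {i})^2 / r^2)"
      by (intro sum.cong refl) (simp add: wi power_divide)
    also have "\<dots> = (\<Sum>i=1..n. (x {i})^2) / r^2" by (simp add: sum_divide_distrib)
    also have "\<dots> = 1" unfolding r_def using S0 False r_def by simp
    finally have "(\<Sum>i=1..n. (w {i})^2) = 1" .
    moreover have "\<forall>C. w C \<noteq> 0 \<longrightarrow> (\<exists>i\<in>{1..n}. C = {i})" unfolding w_def by auto
    ultimately have ws: "w \<in> cl_sphere n" unfolding cl_sphere_def by blast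
    have "x = slice_pt (x {}) w r"
    proof
      fix C
      show "x C = slice_pt (x {}) w r C"
        unfolding slice_pt_def cl_add_def cl_real_def cl_scale_def w_def
        using xs[of C] rpos by (cases "C = {}") auto
    qed
    then show ?thesis using ws by blast
  qed
qed

lemma val_neg: assumes "good n F"
  shows "val n F u w (-v) = cl_add (reP F (u, v)) (\<lambda>C. - cl_mult n w (imP F (u, v)) C)"
  unfolding val_def good_parity[OF assms] cl_mult_neg2 ..

lemma val_eq_imp:
  assumes n: "1 \<le> n" and g1: "good n F" and g2: "good n G"
    and h1: "val n F u e1 v = val n G u e1 v" and h2: "val n F u e1 (-v) = val n G u e1 (-v)"
  shows "F (Complex u v) = G (Complex u v)"
proof -
  have a: "reP F (u, v) C = reP G (u, v) C" for C
    using fun_cong[OF h1, of C] fun_cong[OF h2, of C] unfolding val_neg[OF g1] val_neg[OF g2]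
    unfolding val_def cl_add_def by simp
  have b: "cl_mult n e1 (imP F (u, v)) = cl_mult n e1 (imP G (u, v))"
  proof
    fix C show "cl_mult n e1 (imP F (u, v)) C = cl_mult n e1 (imP G (u, v)) C"
      using fun_cong[OF h1, of C] fun_cong[OF h2, of C] unfolding val_neg[OF g1] val_neg[OF g2]
      unfolding val_def cl_add_def by simp
  qed
  have sF: "supp n (F z)" and sG: "supp n (G z)" for z using g1 g2 unfolding good_def by auto
  have "imP F (u, v) = imP G (u, v)"
    by (rule e1_inj[OF n _ _ b]) (use sF sG in \<open>auto simp: imP_def supp_def\<close>)
  then have c: "Im (F (Complex u v) C) = Im (G (Complex u v) C)" for C
    unfolding imP_def by (metis fst_conv snd_conv)
  have a': "Re (F (Complex u v) C) = Re (G (Complex u v) C)" for C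
    using a[of C] unfolding reP_def by simp
  show ?thesis using a' c by (auto simp: complex_eq_iff)
qed

lemma commute_from:
  assumes n: "1 \<le> n" and rf: "rep n f F" and rg: "rep n g G"
    and h: "\<forall>x\<in>paravectors n. star n f g x = star n g f x"
  shows "cm n (F z) (G z) = cm n (G z) (F z)"
proof -
  have gF: "good n F" and gG: "good n G" using rf rg unfolding rep_def by auto
  have e: "e1 \<in> cl_sphere n" by (rule e1_sphere[OF n])
  have "val n (\<lambda>z. cm n (F z) (G z)) u e1 v' = val n (\<lambda>z. cm n (G z) (F z)) u e1 v'" for u v'
    using h slice_para[OF e, of u v'] rep_val[OF rep_star[OF n rf rg] e, of u v']
      rep_val[OF rep_star[OF n rg rf] e, of u v'] by metis
  then have "cm n (F (Complex (Re z) (Im z))) (G (Complex (Re z) (Im z))) = cm n (G (Complex (Re z) (Im z))) (F (Complex (Re z) (Im z)))"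
    using val_eq_imp[OF n good_cm[OF gF gG] good_cm[OF gG gF], of "Re z" "Im z"] by blast
  then show ?thesis by simp
qed

theorem mainTheorem2:
  fixes n :: nat and f g :: "cl \<Rightarrow> cl"
  assumes "n \<ge> 1"
    and "slice_monogenic n f" and "slice_monogenic n g"
    and "\<forall>x\<in>paravectors n. star n f g x = star n g f x"
  shows "\<forall>x\<in>paravectors n.
           star_exp n (\<lambda>y. cl_add (f y) (g y)) x = star n (star_exp n f) (star_exp n g) x"
proof
  fix x assume x: "x \<in> paravectors n"
  have n: "1 \<le> n" using assms(1) by simp
  obtain F where rf: "rep n f F" using sm_rep[OF assms(2)] by blast
  obtain G where rg: "rep n g G" using sm_rep[OF assms(3)] by blast
  have gF: "good n F" and gG: "good n G" using rf rg unfolding rep_def by auto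
  have sF: "supp n (F z)" and sG: "supp n (G z)" for z using gF gG unfolding good_def by auto
  have comm: "cm n (F z) (G z) = cm n (G z) (F z)" for z by (rule commute_from[OF n rf rg assms(4)])
  obtain u w v where w: "w \<in> cl_sphere n" and xe: "x = slice_pt u w v" using para_repr[OF n x] by blast
  have "star_exp n (\<lambda>y. cl_add (f y) (g y)) x = val n (\<lambda>z. cexp n (\<lambda>C. F z C + G z C)) u w v"
    unfolding xe by (rule rep_val[OF rep_exp[OF n rep_add[OF rf rg]] w])
  also have "(\<lambda>z. cexp n (\<lambda>C. F z C + G z C)) = (\<lambda>z. cm n (cexp n (F z)) (cexp n (G z)))"
    using cexp_add[OF sF sG comm] by blast
  also have "val n (\<lambda>z. cm n (cexp n (F z)) (cexp n (G z))) u w v = star n (star_exp n f) (star_exp n g) x"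
    unfolding xe by (rule rep_val[OF rep_star[OF n rep_exp[OF n rf] rep_exp[OF n rg]] w, symmetric])
  finally show "star_exp n (\<lambda>y. cl_add (f y) (g y)) x = star n (star_exp n f) (star_exp n g) x" .
qed


end
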